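(* There is a constant $C$ such that for every two NFAs $A$ and $B$, each with at most $n$ states and over a common alphabet of $m$ input letters, there exist two DFAs $A'$ and $B'$ with at most $C mn$ states and over an alphabet of at most $C mn$ letters such that, for every $r\ge 1$, there is a tower of height $r$ between $L(A)$ and $L(B)$ if and only if there is a tower of height $r$ between $L(A')$ and $L(B')$. In particular, there is an infinite tower between $L(A)$ and $L(B)$ if and only if there is an infinite tower between $L(A')$ and $L(B')$.
   Context: For strings $v=a_1\cdots a_k$ and $w$, $v\preccurlyeq w$ if $w\in\Sigma^*a_1\Sigma^*a_2\Sigma^*\cdots\Sigma^*a_k\Sigma^*$. A sequence $(w_i)_{i=1}^r$ of strings is a tower between languages $K$ and $L$ if $w_1\in K\cup L$ and for all $i=1,\dots,r-1$: $w_i\preccurlyeq w_{i+1}$, $w_i\in K$ implies $w_{i+1}\in L$, and $w_i\in L$ implies $w_{i+1}\in K$; $r$ is its height. An infinite tower is an infinite sequence with the same properties. *)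

theory Defs
  imports Main "HOL-Library.Sublist"
begin

record ('s, 'a) nfa =
  states   :: "'s set"
  alphabet :: "'a set"
  trans    :: "('s \<times> 'a \<times> 's) set"
  init     :: "'s set"
  final    :: "'s set"

definition wf_nfa :: "('s, 'a) nfa \<Rightarrow> bool" where
  "wf_nfa A \<longleftrightarrow> finite (states A) \<and> finite (alphabet A)
     \<and> init A \<subseteq> states A \<and> final A \<subseteq> states A
     \<and> trans A \<subseteq> states A \<times> alphabet A \<times> states A"

text \<open>A (possibly partial) DFA: a well-formed NFA with exactly one initial
  state and at most one successor per state and letter.\<close>
definition is_dfa :: "('s, 'a) nfa \<Rightarrow> bool" where
  "is_dfa A \<longleftrightarrow> wf_nfa A \<and> (\<exists>q. init A = {q})
     \<and> (\<forall>p a q q'. (p, a, q) \<in> trans A \<longrightarrow> (p, a, q') \<in> trans A \<longrightarrow> q = q')"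

fun reach :: "('s \<times> 'a \<times> 's) set \<Rightarrow> 's \<Rightarrow> 'a list \<Rightarrow> 's \<Rightarrow> bool" where
  "reach T p [] q \<longleftrightarrow> p = q"
| "reach T p (a # w) q \<longleftrightarrow> (\<exists>p'. (p, a, p') \<in> T \<and> reach T p' w q)"

definition lang :: "('s, 'a) nfa \<Rightarrow> 'a list set" where
  "lang A = {w. set w \<subseteq> alphabet A \<and>
              (\<exists>p \<in> init A. \<exists>q \<in> final A. reach (trans A) p w q)}"

text \<open>Towers: the subword order is the library's subseq (scattered subword).
  A finite tower is a nonempty list of words; its height is its length.\<close>
definition is_tower :: "'a list set \<Rightarrow> 'a list set \<Rightarrow> 'a list list \<Rightarrow> bool" where
  "is_tower K L ws \<longleftrightarrow> ws \<noteq> [] \<and> hd ws \<in> K \<union> L \<and>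
     (\<forall>i. Suc i < length ws \<longrightarrow>
        subseq (ws ! i) (ws ! Suc i) \<and>
        (ws ! i \<in> K \<longrightarrow> ws ! Suc i \<in> L) \<and>
        (ws ! i \<in> L \<longrightarrow> ws ! Suc i \<in> K))"

definition is_infinite_tower :: "'a list set \<Rightarrow> 'a list set \<Rightarrow> (nat \<Rightarrow> 'a list) \<Rightarrow> bool" where
  "is_infinite_tower K L w \<longleftrightarrow> w 0 \<in> K \<union> L \<and>
     (\<forall>i. subseq (w i) (w (Suc i)) \<and>
        (w i \<in> K \<longrightarrow> w (Suc i) \<in> L) \<and>
        (w i \<in> L \<longrightarrow> w (Suc i) \<in> K))"

end

theory Submission
  imports Defs "HOL-Library.Countable"
begin

section \<open>Towers vs alternating chains\<close>

definition alt :: "'a list set \<Rightarrow> 'a list set \<Rightarrow> 'a list list \<Rightarrow> bool" where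
  "alt K L ws \<longleftrightarrow> ws \<noteq> [] \<and> (\<forall>i. Suc i < length ws \<longrightarrow> subseq (ws ! i) (ws ! Suc i))
     \<and> (\<exists>b. \<forall>i < length ws. ws ! i \<in> (if even i = b then K else L))"

definition ialt :: "'a list set \<Rightarrow> 'a list set \<Rightarrow> (nat \<Rightarrow> 'a list) \<Rightarrow> bool" where
  "ialt K L w \<longleftrightarrow> (\<forall>i. subseq (w i) (w (Suc i)))
     \<and> (\<exists>b. \<forall>i. w i \<in> (if even i = b then K else L))"

lemma tower_alt:
  assumes "is_tower K L ws" shows "alt K L ws"
proof -
  define b where "b = (hd ws \<in> K)"
  have ne: "ws \<noteq> []" and h: "hd ws \<in> K \<union> L" using assms by (auto simp: is_tower_def)
  have t: "\<forall>i. Suc i < length ws \<longrightarrow> (ws!i \<in> K \<longrightarrow> ws!Suc i \<in> L) \<and> (ws!i \<in> L \<longrightarrow> ws!Suc i \<in> K)"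
    using assms unfolding is_tower_def by blast
  have "ws ! i \<in> (if even i = b then K else L)" if "i < length ws" for i
    using that
  proof (induction i)
    case 0
    have "ws ! 0 = hd ws" using ne by (simp add: hd_conv_nth)
    then show ?case using h by (auto simp: b_def)
  next
    case (Suc i)
    then have i: "ws ! i \<in> (if even i = b then K else L)" by simp
    show ?case
    proof (cases "even i = b")
      case True
      then have "ws ! i \<in> K" using i by simp
      then have "ws ! Suc i \<in> L" using t Suc.prems by blast
      then show ?thesis using True by simp
    next
      case False
      then have "ws ! i \<in> L" using i by simp
      then have "ws ! Suc i \<in> K" using t Suc.prems by blast
      then show ?thesis using False by simp
    qed
  qed
  moreover have "\<forall>i. Suc i < length ws \<longrightarrow> subseq (ws ! i) (ws ! Suc i)"
    using assms unfolding is_tower_def by blast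
  ultimately show ?thesis using ne unfolding alt_def by blast
qed

lemma alt_tower:
  assumes "alt K L ws" shows "\<exists>ws'. is_tower K L ws' \<and> length ws' = length ws"
proof (cases "K \<inter> L = {}")
  case False
  then obtain x where x: "x \<in> K" "x \<in> L" by auto
  have ne: "ws \<noteq> []" using assms unfolding alt_def by blast
  have "is_tower K L (replicate (length ws) x)"
    unfolding is_tower_def using x ne by simp
  then show ?thesis by (intro exI[of _ "replicate (length ws) x"]) simp
next
  case True
  from assms obtain b where b: "\<forall>i < length ws. ws ! i \<in> (if even i = b then K else L)"
    unfolding alt_def by blast
  have ne: "ws \<noteq> []" using assms unfolding alt_def by blast
  have c: "\<forall>i. Suc i < length ws \<longrightarrow> subseq (ws ! i) (ws ! Suc i)" using assms unfolding alt_def by blast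
  have "hd ws \<in> K \<union> L"
  proof -
    have "ws ! 0 \<in> (if even (0::nat) = b then K else L)" using b ne by blast
    then show ?thesis using ne by (simp add: hd_conv_nth split: if_splits)
  qed
  moreover have "(ws ! i \<in> K \<longrightarrow> ws ! Suc i \<in> L) \<and> (ws ! i \<in> L \<longrightarrow> ws ! Suc i \<in> K)"
    if s: "Suc i < length ws" for i
  proof -
    have 1: "ws ! i \<in> (if even i = b then K else L)" using b s by simp
    have 2: "ws ! Suc i \<in> (if even (Suc i) = b then K else L)" using b s by blast
    show ?thesis using 1 2 True by (cases "even i = b") auto
  qed
  ultimately have "is_tower K L ws" using ne c unfolding is_tower_def by blast
  then show ?thesis by blast
qed

lemma tower_iff_alt:
  "(\<exists>ws. is_tower K L ws \<and> length ws = r) \<longleftrightarrow> (\<exists>ws. alt K L ws \<and> length ws = r)"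
  using tower_alt alt_tower by metis

lemma itower_ialt:
  assumes "is_infinite_tower K L w" shows "ialt K L w"
proof -
  define b where "b = (w 0 \<in> K)"
  have h: "w 0 \<in> K \<union> L" using assms unfolding is_infinite_tower_def by blast
  have t: "\<forall>i. (w i \<in> K \<longrightarrow> w (Suc i) \<in> L) \<and> (w i \<in> L \<longrightarrow> w (Suc i) \<in> K)"
    using assms unfolding is_infinite_tower_def by blast
  have "w i \<in> (if even i = b then K else L)" for i
  proof (induction i)
    case 0
    then show ?case using h by (auto simp: b_def)
  next
    case (Suc i)
    show ?case
    proof (cases "even i = b")
      case True
      then show ?thesis using Suc t by simp
    next
      case False
      then show ?thesis using Suc t by simp
    qed
  qed
  moreover have "\<forall>i. subseq (w i) (w (Suc i))" using assms unfolding is_infinite_tower_def by blast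
  ultimately show ?thesis unfolding ialt_def by blast
qed

lemma ialt_itower:
  assumes "ialt K L w" shows "\<exists>w'. is_infinite_tower K L w'"
proof (cases "K \<inter> L = {}")
  case False
  then obtain x where x: "x \<in> K" "x \<in> L" by auto
  have "is_infinite_tower K L (\<lambda>_. x)"
    using x unfolding is_infinite_tower_def by simp
  then show ?thesis by blast
next
  case True
  from assms obtain b where b: "\<forall>i. w i \<in> (if even i = b then K else L)"
    unfolding ialt_def by blast
  have c: "\<forall>i. subseq (w i) (w (Suc i))" using assms unfolding ialt_def by blast
  have "w 0 \<in> K \<union> L" using b[rule_format, of 0] by (simp split: if_splits)
  moreover have "(w i \<in> K \<longrightarrow> w (Suc i) \<in> L) \<and> (w i \<in> L \<longrightarrow> w (Suc i) \<in> K)" for i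
  proof -
    have 1: "w i \<in> (if even i = b then K else L)" using b by simp
    have 2: "w (Suc i) \<in> (if even (Suc i) = b then K else L)" using b by blast
    show ?thesis using 1 2 True by (cases "even i = b") auto
  qed
  ultimately have "is_infinite_tower K L w" using c unfolding is_infinite_tower_def by blast
  then show ?thesis by blast
qed

lemma itower_iff_ialt:
  "(\<exists>w. is_infinite_tower K L w) \<longleftrightarrow> (\<exists>w. ialt K L w)"
  using itower_ialt ialt_itower by metis

section \<open>Projection\<close>

fun proj :: "nat list \<Rightarrow> nat list" where
  "proj [] = []"
| "proj (x # w) = (if x mod 3 = 0 then x div 3 # proj w else proj w)"

lemma proj_mono: "subseq u w \<Longrightarrow> subseq (proj u) (proj w)"
  by (induction rule: list_emb.induct) auto

lemma proj_append[simp]: "proj (u @ v) = proj u @ proj v"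
  by (induction u) auto

lemma proj_Nil_iff: "proj u = [] \<longleftrightarrow> (\<forall>x\<in>set u. x mod 3 \<noteq> 0)"
  by (induction u) auto

lemma proj_decomp:
  "proj u = b # ys \<Longrightarrow> \<exists>S r. u = S @ (3*b) # r \<and> (\<forall>x\<in>set S. x mod 3 \<noteq> 0) \<and> proj r = ys"
proof (induction u)
  case Nil then show ?case by simp
next
  case (Cons x u)
  show ?case
  proof (cases "x mod 3 = 0")
    case True
    then have "x = 3 * b" "proj u = ys" using Cons.prems by auto
    then show ?thesis by (intro exI[of _ "[]"] exI[of _ u]) auto
  next
    case False
    then obtain S r where "u = S @ (3*b) # r" "\<forall>x\<in>set S. x mod 3 \<noteq> 0" "proj r = ys"
      using Cons by auto
    then show ?thesis using False by (intro exI[of _ "x # S"] exI[of _ r]) auto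
  qed
qed

lemma reach_append: "reach T p (u @ v) q \<longleftrightarrow> (\<exists>r. reach T p u r \<and> reach T r v q)"
  by (induction u arbitrary: p) auto

section \<open>Renaming states\<close>

definition mapn :: "('s \<Rightarrow> 't) \<Rightarrow> ('s, 'a) nfa \<Rightarrow> ('t, 'a) nfa" where
  "mapn f M = \<lparr>states = f ` states M, alphabet = alphabet M,
     trans = (\<lambda>(p, a, q). (f p, a, f q)) ` trans M, init = f ` init M, final = f ` final M\<rparr>"

lemma reach_map:
  assumes "inj f"
  shows "reach ((\<lambda>(p, a, q). (f p, a, f q)) ` T) (f p) w (f q) \<longleftrightarrow> reach T p w q"
proof (induction w arbitrary: p)
  case Nil then show ?case using assms by (simp add: inj_eq)
next
  case (Cons a w)
  have "reach ((\<lambda>(p, a, q). (f p, a, f q)) ` T) (f p) (a # w) (f q) \<longleftrightarrow>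
        (\<exists>p'. (p, a, p') \<in> T \<and> reach ((\<lambda>(p, a, q). (f p, a, f q)) ` T) (f p') w (f q))"
  proof
    assume "reach ((\<lambda>(p, a, q). (f p, a, f q)) ` T) (f p) (a # w) (f q)"
    then obtain y where y: "(f p, a, y) \<in> (\<lambda>(p, a, q). (f p, a, f q)) ` T"
      "reach ((\<lambda>(p, a, q). (f p, a, f q)) ` T) y w (f q)" by (meson reach.simps(2))
    from y(1) obtain p1 a1 q1 where "(p1, a1, q1) \<in> T" "f p = f p1" "a = a1" "y = f q1" by auto
    then show "\<exists>p'. (p, a, p') \<in> T \<and> reach ((\<lambda>(p, a, q). (f p, a, f q)) ` T) (f p') w (f q)"
      using y(2) assms by (auto simp: inj_eq)
  next
    assume "\<exists>p'. (p, a, p') \<in> T \<and> reach ((\<lambda>(p, a, q). (f p, a, f q)) ` T) (f p') w (f q)"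
    then obtain p' where "(p, a, p') \<in> T" "reach ((\<lambda>(p, a, q). (f p, a, f q)) ` T) (f p') w (f q)" by blast
    then show "reach ((\<lambda>(p, a, q). (f p, a, f q)) ` T) (f p) (a # w) (f q)"
      by (auto intro!: exI[of _ "f p'"] image_eqI[of _ _ "(p, a, p')"])
  qed
  then show ?case using Cons by simp
qed

lemma lang_map: "inj f \<Longrightarrow> lang (mapn f M) = lang M"
  unfolding lang_def mapn_def by (auto simp: reach_map)

lemma is_dfa_map:
  assumes "inj f" "wf_nfa M" "init M = {q0}"
    "\<And>p a q q'. (p, a, q) \<in> trans M \<Longrightarrow> (p, a, q') \<in> trans M \<Longrightarrow> q = q'"
  shows "is_dfa (mapn f M)"
proof -
  have "wf_nfa (mapn f M)" using assms(2) unfolding wf_nfa_def mapn_def by auto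
  moreover have "q = q'" if "(p, a, q) \<in> trans (mapn f M)" "(p, a, q') \<in> trans (mapn f M)" for p a q q'
  proof -
    from that obtain p1 q1 p2 q2 where "(p1, a, q1) \<in> trans M" "(p2, a, q2) \<in> trans M"
      "p = f p1" "q = f q1" "p = f p2" "q' = f q2" unfolding mapn_def by auto
    then show ?thesis using assms(1,4) by (metis inj_eq)
  qed
  ultimately show ?thesis unfolding is_dfa_def using assms(3) by (auto simp: mapn_def)
qed

datatype st = Start | St nat | Mid nat nat

instance st :: countable by countable_datatype

definition dstep :: "(nat, nat) nfa \<Rightarrow> nat \<Rightarrow> st \<Rightarrow> nat \<Rightarrow> st option" where
  "dstep M t s x = (case s of
      Start \<Rightarrow> if x mod 3 = 0 then None
               else if x mod 3 = t \<and> x div 3 \<in> init M then Some (St (x div 3)) else Some Start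
    | St p \<Rightarrow> if x mod 3 = 0 then Some (Mid p (x div 3)) else Some (St p)
    | Mid p a \<Rightarrow> if x mod 3 = 0 then None
               else if x mod 3 = t \<and> (p, a, x div 3) \<in> trans M then Some (St (x div 3)) else Some (Mid p a))"

definition dstates :: "(nat, nat) nfa \<Rightarrow> st set" where
  "dstates M = insert Start (St ` states M \<union> (\<lambda>(p, a). Mid p a) ` (states M \<times> alphabet M))"

definition dtrans :: "(nat, nat) nfa \<Rightarrow> nat \<Rightarrow> nat set \<Rightarrow> (st \<times> nat \<times> st) set" where
  "dtrans M t G = {(s, x, s'). s \<in> dstates M \<and> x \<in> G \<and> dstep M t s x = Some s'}"

definition dfa0 :: "(nat, nat) nfa \<Rightarrow> nat \<Rightarrow> nat set \<Rightarrow> (st, nat) nfa" where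
  "dfa0 M t G = \<lparr>states = dstates M, alphabet = G, trans = dtrans M t G,
     init = {Start}, final = St ` final M\<rparr>"

locale cons =
  fixes M :: "(nat, nat) nfa" and t :: nat and G :: "nat set"
  assumes wf: "wf_nfa M" and t: "t = 1 \<or> t = 2" and finG: "finite G"
    and G0: "\<And>x. x \<in> G \<Longrightarrow> x mod 3 = 0 \<Longrightarrow> x div 3 \<in> alphabet M"
    and Ga: "\<And>a. a \<in> alphabet M \<Longrightarrow> 3 * a \<in> G"
    and Gq: "\<And>q. q \<in> states M \<Longrightarrow> 3 * q + t \<in> G"
begin

lemma tmod: "(3 * q + t) mod 3 = t" "(3 * q + t) div 3 = q" "t \<noteq> 0"
  using t by auto

lemma wf0: "wf_nfa (dfa0 M t G)"
proof -
  have fin: "finite (dstates M)" using wf unfolding dstates_def wf_nfa_def by auto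
  have "dtrans M t G \<subseteq> dstates M \<times> G \<times> dstates M"
  proof
    fix e assume "e \<in> dtrans M t G"
    then obtain s x s' where e: "e = (s, x, s')" "s \<in> dstates M" "x \<in> G" "dstep M t s x = Some s'"
      unfolding dtrans_def by auto
    have "s' \<in> dstates M"
    proof (cases s)
      case Start
      then show ?thesis using e wf unfolding dstep_def dstates_def wf_nfa_def
        by (auto split: if_splits)
    next
      case (St p)
      then show ?thesis using e G0[of x] unfolding dstep_def dstates_def
        by (auto split: if_splits)
    next
      case (Mid p a)
      then have "(p, a, x div 3) \<in> trans M \<Longrightarrow> x div 3 \<in> states M"
        using wf unfolding wf_nfa_def by auto
      then show ?thesis using e Mid unfolding dstep_def dstates_def
        by (auto split: if_splits)
    qed
    then show "e \<in> dstates M \<times> G \<times> dstates M" using e by auto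
  qed
  moreover have "St ` final M \<subseteq> dstates M" using wf unfolding wf_nfa_def dstates_def by auto
  ultimately show ?thesis using fin finG unfolding wf_nfa_def dfa0_def dstates_def by auto
qed

lemma det0: "(p, a, q) \<in> trans (dfa0 M t G) \<Longrightarrow> (p, a, q') \<in> trans (dfa0 M t G) \<Longrightarrow> q = q'"
  unfolding dfa0_def dtrans_def by auto

lemma sound_reach:
  "reach (dtrans M t G) s w (St q) \<Longrightarrow> (case s of
      Start \<Rightarrow> \<exists>p\<in>init M. reach (trans M) p (proj w) q
    | St p \<Rightarrow> reach (trans M) p (proj w) q
    | Mid p a \<Rightarrow> \<exists>p'. (p, a, p') \<in> trans M \<and> reach (trans M) p' (proj w) q)"
proof (induction w arbitrary: s)
  case Nil
  then show ?case by (cases s) auto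
next
  case (Cons x w)
  then obtain s1 where s1: "dstep M t s x = Some s1" "reach (dtrans M t G) s1 w (St q)"
    unfolding dtrans_def by auto
  note IH = Cons.IH[OF s1(2)]
  show ?case
  proof (cases s)
    case Start
    then have x: "x mod 3 \<noteq> 0" using s1 unfolding dstep_def by (auto split: if_splits)
    show ?thesis
    proof (cases "x mod 3 = t \<and> x div 3 \<in> init M")
      case True
      then have "s1 = St (x div 3)" using s1 Start x unfolding dstep_def by auto
      then show ?thesis using IH Start x True by auto
    next
      case False
      then have "s1 = Start" using s1 Start x unfolding dstep_def by auto
      then show ?thesis using IH Start x by auto
    qed
  next
    case (St p)
    show ?thesis
    proof (cases "x mod 3 = 0")
      case True
      then have "s1 = Mid p (x div 3)" using s1 St unfolding dstep_def by auto
      then show ?thesis using IH St True by auto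
    next
      case False
      then have "s1 = St p" using s1 St unfolding dstep_def by auto
      then show ?thesis using IH St False by auto
    qed
  next
    case (Mid p a)
    then have x: "x mod 3 \<noteq> 0" using s1 unfolding dstep_def by (auto split: if_splits)
    show ?thesis
    proof (cases "x mod 3 = t \<and> (p, a, x div 3) \<in> trans M")
      case True
      then have "s1 = St (x div 3)" using s1 Mid x unfolding dstep_def by auto
      then show ?thesis using IH Mid x True by auto
    next
      case False
      then have "s1 = Mid p a" using s1 Mid x unfolding dstep_def by auto
      then show ?thesis using IH Mid x by auto
    qed
  qed
qed

lemma proj_set: "set w \<subseteq> G \<Longrightarrow> set (proj w) \<subseteq> alphabet M"
  by (induction w) (auto dest: G0)

lemma sound: "w \<in> lang (dfa0 M t G) \<Longrightarrow> proj w \<in> lang M"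
proof -
  assume "w \<in> lang (dfa0 M t G)"
  then obtain q where w: "set w \<subseteq> G" "q \<in> final M" "reach (dtrans M t G) Start w (St q)"
    unfolding lang_def dfa0_def by auto
  from sound_reach[OF w(3)] obtain p where "p \<in> init M" "reach (trans M) p (proj w) q" by auto
  then show ?thesis using w proj_set unfolding lang_def by auto
qed

lemma stay: "\<forall>x\<in>set u. x mod 3 \<noteq> 0 \<Longrightarrow> set u \<subseteq> G \<Longrightarrow> p \<in> states M \<Longrightarrow>
    reach (dtrans M t G) (St p) u (St p)"
  by (induction u) (auto simp: dtrans_def dstep_def dstates_def)

lemma two_steps:
  assumes "(p, b, p1) \<in> trans M"
  shows "reach (dtrans M t G) (St p) [3 * b, 3 * p1 + t] (St p1)"
proof -
  have w: "p \<in> states M" "b \<in> alphabet M" "p1 \<in> states M" using assms wf unfolding wf_nfa_def by auto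
  have "(St p, 3 * b, Mid p b) \<in> dtrans M t G"
    using w Ga unfolding dtrans_def dstep_def dstates_def by auto
  moreover have "(Mid p b, 3 * p1 + t, St p1) \<in> dtrans M t G"
    using w Gq assms tmod unfolding dtrans_def dstep_def dstates_def by auto
  ultimately show ?thesis by auto
qed

lemma ext_St:
  "reach (trans M) p v q \<Longrightarrow> p \<in> states M \<Longrightarrow> set u \<subseteq> G \<Longrightarrow> subseq (proj u) v \<Longrightarrow>
   \<exists>v'. reach (dtrans M t G) (St p) v' (St q) \<and> subseq u v' \<and> proj v' = v \<and> set v' \<subseteq> G"
proof (induction v arbitrary: p u)
  case Nil
  then have "proj u = []" by simp
  then have "\<forall>x\<in>set u. x mod 3 \<noteq> 0" by (simp add: proj_Nil_iff)
  moreover have "p = q" using Nil by simp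
  ultimately show ?case using Nil stay by (intro exI[of _ u]) (auto simp: proj_Nil_iff)
next
  case (Cons b v)
  then obtain p1 where p1: "(p, b, p1) \<in> trans M" "reach (trans M) p1 v q" by auto
  have w: "b \<in> alphabet M" "p1 \<in> states M" using p1 wf unfolding wf_nfa_def by auto
  have ts: "reach (dtrans M t G) (St p) [3 * b, 3 * p1 + t] (St p1)" using two_steps[OF p1(1)] .
  have pr2: "proj [3 * b, 3 * p1 + t] = [b]" using tmod by simp
  have G2: "set [3 * b, 3 * p1 + t] \<subseteq> G" using w Ga Gq by auto
  show ?case
  proof (cases "\<exists>ys. proj u = b # ys")
    case False
    then have "subseq (proj u) v" using Cons.prems(4) by (cases "proj u") auto
    then obtain v1 where v1: "reach (dtrans M t G) (St p1) v1 (St q)" "subseq u v1" "proj v1 = v" "set v1 \<subseteq> G"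
      using Cons.IH[OF p1(2) w(2) Cons.prems(3)] by blast
    have "reach (dtrans M t G) (St p) ([3 * b, 3 * p1 + t] @ v1) (St q)"
      using ts v1(1) reach_append by metis
    moreover have "subseq u ([3 * b, 3 * p1 + t] @ v1)" using v1(2) by (rule list_emb_append2)
    moreover have "proj ([3 * b, 3 * p1 + t] @ v1) = b # v" using pr2 v1(3) by (simp only: proj_append) simp
    moreover have "set ([3 * b, 3 * p1 + t] @ v1) \<subseteq> G" using G2 v1(4) by simp
    ultimately show ?thesis by blast
  next
    case True
    then obtain ys where ys: "proj u = b # ys" by blast
    then have sub: "subseq ys v" using Cons.prems(4) by simp
    obtain S r where Sr: "u = S @ (3*b) # r" "\<forall>x\<in>set S. x mod 3 \<noteq> 0" "proj r = ys"
      using proj_decomp[OF ys] by blast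
    have rG: "set r \<subseteq> G" "set S \<subseteq> G" using Cons.prems(3) Sr(1) by auto
    then obtain v1 where v1: "reach (dtrans M t G) (St p1) v1 (St q)" "subseq r v1" "proj v1 = v" "set v1 \<subseteq> G"
      using Cons.IH[OF p1(2) w(2) rG(1)] sub Sr(3) by blast
    have "reach (dtrans M t G) (St p) S (St p)" using stay Sr(2) rG(2) Cons.prems(2) by blast
    then have "reach (dtrans M t G) (St p) (S @ [3 * b, 3 * p1 + t] @ v1) (St q)"
      using ts v1(1) reach_append by metis
    moreover have "subseq u (S @ [3 * b, 3 * p1 + t] @ v1)"
      using v1(2) Sr(1) by (simp add: subseq_append' list_emb_Cons)
    moreover have "proj S = []" using Sr(2) by (simp add: proj_Nil_iff)
    moreover have "proj (S @ [3 * b, 3 * p1 + t] @ v1) = b # v" using pr2 v1(3) \<open>proj S = []\<close>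
      by (simp only: proj_append) simp
    moreover have "set (S @ [3 * b, 3 * p1 + t] @ v1) \<subseteq> G" using G2 v1(4) rG by simp
    ultimately show ?thesis by blast
  qed
qed

lemma ext:
  assumes "v \<in> lang M" "set u \<subseteq> G" "subseq (proj u) v"
  shows "\<exists>v'. v' \<in> lang (dfa0 M t G) \<and> subseq u v' \<and> proj v' = v"
proof -
  from assms(1) obtain p0 q where p: "p0 \<in> init M" "q \<in> final M" "reach (trans M) p0 v q"
    unfolding lang_def by auto
  have p0: "p0 \<in> states M" using p wf unfolding wf_nfa_def by auto
  obtain v1 where v1: "reach (dtrans M t G) (St p0) v1 (St q)" "subseq u v1" "proj v1 = v" "set v1 \<subseteq> G"
    using ext_St[OF p(3) p0 assms(2,3)] by blast
  have "(Start, 3 * p0 + t, St p0) \<in> dtrans M t G"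
    using p p0 Gq tmod unfolding dtrans_def dstep_def dstates_def by auto
  then have "reach (dtrans M t G) Start ((3 * p0 + t) # v1) (St q)" using v1 by auto
  moreover have "set ((3 * p0 + t) # v1) \<subseteq> G" using v1 Gq p0 by auto
  ultimately have "(3 * p0 + t) # v1 \<in> lang (dfa0 M t G)"
    using p unfolding lang_def dfa0_def by auto
  moreover have "proj ((3 * p0 + t) # v1) = v" using v1 tmod by simp
  ultimately show ?thesis using v1 by (intro exI[of _ "(3 * p0 + t) # v1"]) auto
qed

lemma lang_G: "w \<in> lang (dfa0 M t G) \<Longrightarrow> set w \<subseteq> G"
  unfolding lang_def dfa0_def by auto

end

section \<open>Transfer of chains\<close>

primrec lseq :: "(nat \<Rightarrow> nat list set) \<Rightarrow> (nat \<Rightarrow> nat list) \<Rightarrow> nat \<Rightarrow> nat list" where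
  "lseq X w 0 = (SOME v. v \<in> X 0 \<and> subseq [] v \<and> proj v = w 0)"
| "lseq X w (Suc i) = (SOME v. v \<in> X (Suc i) \<and> subseq (lseq X w i) v \<and> proj v = w (Suc i))"

lemma lseq_prop:
  assumes ext: "\<And>i v u. ok i \<Longrightarrow> v \<in> Y i \<Longrightarrow> set u \<subseteq> G \<Longrightarrow> subseq (proj u) v \<Longrightarrow>
                  \<exists>v'. v' \<in> X i \<and> subseq u v' \<and> proj v' = v"
    and gsX: "\<And>i v. v \<in> X i \<Longrightarrow> set v \<subseteq> G"
    and okd: "\<And>i. ok (Suc i) \<Longrightarrow> ok i"
    and ch: "\<And>i. ok (Suc i) \<Longrightarrow> subseq (w i) (w (Suc i))"
    and mem: "\<And>i. ok i \<Longrightarrow> w i \<in> Y i"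
  shows "ok i \<Longrightarrow> lseq X w i \<in> X i \<and> proj (lseq X w i) = w i"
proof (induction i)
  case 0
  have ex: "\<exists>v'. v' \<in> X 0 \<and> subseq [] v' \<and> proj v' = w 0"
    using ext[OF 0 mem[OF 0], of "[]"] by simp
  show ?case using someI_ex[OF ex] by simp
next
  case (Suc i)
  have oi: "ok i" using okd Suc.prems .
  note IH = Suc.IH[OF oi]
  have "subseq (proj (lseq X w i)) (w (Suc i))" using IH ch[OF Suc.prems] by simp
  then have ex: "\<exists>v'. v' \<in> X (Suc i) \<and> subseq (lseq X w i) v' \<and> proj v' = w (Suc i)"
    using ext[OF Suc.prems mem[OF Suc.prems]] gsX IH by blast
  show ?case using someI_ex[OF ex] by simp
qed

lemma lseq_chain:
  assumes "lseq X w i \<in> X i \<and> proj (lseq X w i) = w i"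
    and ext: "\<And>v u. v \<in> Y \<Longrightarrow> set u \<subseteq> G \<Longrightarrow> subseq (proj u) v \<Longrightarrow>
                  \<exists>v'. v' \<in> X (Suc i) \<and> subseq u v' \<and> proj v' = v"
    and "w (Suc i) \<in> Y" "subseq (w i) (w (Suc i))" "set (lseq X w i) \<subseteq> G"
  shows "subseq (lseq X w i) (lseq X w (Suc i))"
proof -
  have ex: "\<exists>v'. v' \<in> X (Suc i) \<and> subseq (lseq X w i) v' \<and> proj v' = w (Suc i)"
    using ext[OF assms(3) assms(5)] assms(1,4) by simp
  show ?thesis using someI_ex[OF ex] by simp
qed

locale transfer =
  fixes K L K' L' :: "nat list set" and G :: "nat set"
  assumes sK: "\<And>w. w \<in> K' \<Longrightarrow> proj w \<in> K" and sL: "\<And>w. w \<in> L' \<Longrightarrow> proj w \<in> L"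
    and eK: "\<And>v u. v \<in> K \<Longrightarrow> set u \<subseteq> G \<Longrightarrow> subseq (proj u) v \<Longrightarrow> \<exists>v'. v' \<in> K' \<and> subseq u v' \<and> proj v' = v"
    and eL: "\<And>v u. v \<in> L \<Longrightarrow> set u \<subseteq> G \<Longrightarrow> subseq (proj u) v \<Longrightarrow> \<exists>v'. v' \<in> L' \<and> subseq u v' \<and> proj v' = v"
    and gK: "\<And>w. w \<in> K' \<Longrightarrow> set w \<subseteq> G" and gL: "\<And>w. w \<in> L' \<Longrightarrow> set w \<subseteq> G"
begin

definition XX :: "bool \<Rightarrow> nat \<Rightarrow> nat list set" where "XX b i = (if even i = b then K' else L')"
definition YY :: "bool \<Rightarrow> nat \<Rightarrow> nat list set" where "YY b i = (if even i = b then K else L)"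

lemma eXY: "v \<in> YY b i \<Longrightarrow> set u \<subseteq> G \<Longrightarrow> subseq (proj u) v \<Longrightarrow> \<exists>v'. v' \<in> XX b i \<and> subseq u v' \<and> proj v' = v"
  unfolding XX_def YY_def using eK eL by (auto split: if_splits)

lemma gXY: "v \<in> XX b i \<Longrightarrow> set v \<subseteq> G"
  unfolding XX_def using gK gL by (auto split: if_splits)

lemma alt_fwd:
  assumes "alt K L ws"
  shows "\<exists>ws'. alt K' L' ws' \<and> length ws' = length ws"
proof -
  from assms obtain b where b: "\<forall>i < length ws. ws ! i \<in> YY b i"
    unfolding alt_def YY_def by blast
  have ne: "ws \<noteq> []" and c: "\<forall>i. Suc i < length ws \<longrightarrow> subseq (ws ! i) (ws ! Suc i)"
    using assms unfolding alt_def by blast+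
  define w where "w = (\<lambda>i. ws ! i)"
  define g where "g = lseq (XX b) w"
  have e: "\<And>i v u. i < length ws \<Longrightarrow> v \<in> YY b i \<Longrightarrow> set u \<subseteq> G \<Longrightarrow> subseq (proj u) v \<Longrightarrow>
      \<exists>v'. v' \<in> XX b i \<and> subseq u v' \<and> proj v' = v" using eXY by blast
  have okd: "\<And>i. Suc i < length ws \<Longrightarrow> i < length ws" by simp
  have ch: "\<And>i. Suc i < length ws \<Longrightarrow> subseq (w i) (w (Suc i))" using c by (simp add: w_def)
  have mem: "\<And>i. i < length ws \<Longrightarrow> w i \<in> YY b i" using b by (simp add: w_def)
  have P: "i < length ws \<Longrightarrow> g i \<in> XX b i \<and> proj (g i) = w i" for i
    unfolding g_def by (rule lseq_prop[where ok = "\<lambda>i. i < length ws" and Y = "YY b" and X = "XX b" and G = G and w = w, OF e gXY okd ch mem])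
  have C: "subseq (g i) (g (Suc i))" if "Suc i < length ws" for i
  proof -
    have 1: "lseq (XX b) w i \<in> XX b i \<and> proj (lseq (XX b) w i) = w i" using P that by (simp add: g_def)
    have 2: "set (lseq (XX b) w i) \<subseteq> G" using 1 gXY by blast
    have 3: "w (Suc i) \<in> YY b (Suc i)" using b that by (simp add: w_def)
    have 4: "subseq (w i) (w (Suc i))" using c that by (simp add: w_def)
    show ?thesis unfolding g_def
      by (rule lseq_chain[OF 1 eXY 3 4 2])
  qed
  define ws' where "ws' = map g [0..<length ws]"
  have "alt K' L' ws'"
    unfolding alt_def
  proof (intro conjI)
    show "ws' \<noteq> []" using ne by (simp add: ws'_def)
    show "\<forall>i. Suc i < length ws' \<longrightarrow> subseq (ws' ! i) (ws' ! Suc i)"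
    proof (intro allI impI)
      fix i assume "Suc i < length ws'"
      then have "Suc i < length ws" by (simp add: ws'_def)
      then show "subseq (ws' ! i) (ws' ! Suc i)" using C[of i] unfolding ws'_def
        by (simp del: upt_Suc)
    qed
    show "\<exists>b. \<forall>i<length ws'. ws' ! i \<in> (if even i = b then K' else L')"
    proof (intro exI[of _ b] allI impI)
      fix i assume "i < length ws'"
      then have i: "i < length ws" by (simp add: ws'_def)
      then have "ws' ! i = g i" unfolding ws'_def by (simp del: upt_Suc)
      then show "ws' ! i \<in> (if even i = b then K' else L')" using P[OF i] unfolding XX_def by simp
    qed
  qed
  then show ?thesis by (intro exI[of _ ws']) (simp add: ws'_def)
qed

lemma alt_bwd:
  assumes "alt K' L' ws"
  shows "alt K L (map proj ws)"
proof -
  from assms obtain b where b: "\<forall>i < length ws. ws ! i \<in> (if even i = b then K' else L')"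
    unfolding alt_def by blast
  have "\<forall>i < length ws. proj (ws ! i) \<in> (if even i = b then K else L)"
    using b sK sL by (auto split: if_splits)
  then have 1: "\<forall>i < length (map proj ws). map proj ws ! i \<in> (if even i = b then K else L)" by simp
  have c: "\<forall>i. Suc i < length ws \<longrightarrow> subseq (ws ! i) (ws ! Suc i)" "ws \<noteq> []"
    using assms unfolding alt_def by blast+
  have 2: "\<forall>i. Suc i < length (map proj ws) \<longrightarrow> subseq (map proj ws ! i) (map proj ws ! Suc i)"
  proof (intro allI impI)
    fix i assume "Suc i < length (map proj ws)"
    then have "Suc i < length ws" by simp
    then have "subseq (ws ! i) (ws ! Suc i)" using c(1) by blast
    then show "subseq (map proj ws ! i) (map proj ws ! Suc i)" using \<open>Suc i < length ws\<close>
      by (simp add: proj_mono)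
  qed
  show ?thesis unfolding alt_def using 1 2 c(2) by blast
qed

lemma alt_iff: "(\<exists>ws. alt K L ws \<and> length ws = r) \<longleftrightarrow> (\<exists>ws. alt K' L' ws \<and> length ws = r)"
proof
  assume "\<exists>ws. alt K L ws \<and> length ws = r"
  then obtain ws where "alt K L ws" "length ws = r" by blast
  then show "\<exists>ws. alt K' L' ws \<and> length ws = r" using alt_fwd by blast
next
  assume "\<exists>ws. alt K' L' ws \<and> length ws = r"
  then obtain ws where "alt K' L' ws" "length ws = r" by blast
  then have "alt K L (map proj ws) \<and> length (map proj ws) = r" using alt_bwd by simp
  then show "\<exists>ws. alt K L ws \<and> length ws = r" by blast
qed

lemma ialt_fwd:
  assumes "ialt K L w"
  shows "\<exists>w'. ialt K' L' w'"
proof -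
  from assms obtain b where b: "\<forall>i. w i \<in> YY b i"
    unfolding ialt_def YY_def by blast
  have c: "\<forall>i. subseq (w i) (w (Suc i))" using assms unfolding ialt_def by blast
  define g where "g = lseq (XX b) w"
  have e: "\<And>i v u. True \<Longrightarrow> v \<in> YY b i \<Longrightarrow> set u \<subseteq> G \<Longrightarrow> subseq (proj u) v \<Longrightarrow>
      \<exists>v'. v' \<in> XX b i \<and> subseq u v' \<and> proj v' = v" using eXY by blast
  have okd: "\<And>i. True \<Longrightarrow> True" by simp
  have ch: "\<And>i. True \<Longrightarrow> subseq (w i) (w (Suc i))" using c by simp
  have mem: "\<And>i. True \<Longrightarrow> w i \<in> YY b i" using b by simp
  have P: "g i \<in> XX b i \<and> proj (g i) = w i" for i
    unfolding g_def by (rule lseq_prop[where ok = "\<lambda>i. True" and Y = "YY b" and X = "XX b" and G = G and w = w, OF e gXY okd ch mem TrueI])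
  have C: "subseq (g i) (g (Suc i))" for i
  proof -
    have 1: "lseq (XX b) w i \<in> XX b i \<and> proj (lseq (XX b) w i) = w i" using P by (simp add: g_def)
    have 2: "set (lseq (XX b) w i) \<subseteq> G" using 1 gXY by blast
    have 3: "w (Suc i) \<in> YY b (Suc i)" using b by simp
    have 4: "subseq (w i) (w (Suc i))" using c by simp
    show ?thesis unfolding g_def
      by (rule lseq_chain[OF 1 eXY 3 4 2])
  qed
  have "\<forall>i. g i \<in> (if even i = b then K' else L')" using P unfolding XX_def by blast
  then have "ialt K' L' g" unfolding ialt_def using C by blast
  then show ?thesis by blast
qed

lemma ialt_bwd:
  assumes "ialt K' L' w"
  shows "ialt K L (\<lambda>i. proj (w i))"
proof -
  from assms obtain b where b: "\<forall>i. w i \<in> (if even i = b then K' else L')"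
    unfolding ialt_def by blast
  have "\<forall>i. proj (w i) \<in> (if even i = b then K else L)"
    using b sK sL by (auto split: if_splits)
  moreover have "\<forall>i. subseq (proj (w i)) (proj (w (Suc i)))"
    using assms proj_mono unfolding ialt_def by blast
  ultimately show ?thesis unfolding ialt_def by blast
qed

lemma ialt_iff: "(\<exists>w. ialt K L w) \<longleftrightarrow> (\<exists>w. ialt K' L' w)"
  using ialt_fwd ialt_bwd by blast

end

lemma card_dstates:
  assumes "wf_nfa M"
  shows "card (dstates M) \<le> 1 + card (states M) + card (states M) * card (alphabet M)"
proof -
  have f: "finite (states M)" "finite (alphabet M)" using assms unfolding wf_nfa_def by auto
  have "card (dstates M) \<le> Suc (card (St ` states M \<union> (\<lambda>(p, a). Mid p a) ` (states M \<times> alphabet M)))"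
    unfolding dstates_def using f by (simp add: card_insert_if)
  also have "card (St ` states M \<union> (\<lambda>(p, a). Mid p a) ` (states M \<times> alphabet M))
     \<le> card (St ` states M) + card ((\<lambda>(p, a). Mid p a) ` (states M \<times> alphabet M))"
    by (rule card_Un_le)
  also have "card (St ` states M) \<le> card (states M)" using f(1) by (rule card_image_le)
  also have "card ((\<lambda>(p, a). Mid p a) ` (states M \<times> alphabet M)) \<le> card (states M \<times> alphabet M)"
    using f by (intro card_image_le) simp
  also have "card (states M \<times> alphabet M) = card (states M) * card (alphabet M)"
    by (rule card_cartesian_product)
  finally show ?thesis by simp
qed

lemma arith_bound:
  fixes n m a b :: nat
  assumes "1 \<le> n" "1 \<le> m" "a \<le> n" "b = m"
  shows "1 + a + a * b \<le> 3 * m * n" "b + n + n \<le> 3 * m * n"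
proof -
  have "a * b \<le> n * m" using assms by (simp add: mult_le_mono1)
  moreover have "n \<le> n * m" "1 \<le> n * m" using assms by simp_all
  moreover have "3 * m * n = n * m + n * m + n * m" by simp
  moreover have "m \<le> n * m" using assms by simp
  ultimately show "1 + a + a * b \<le> 3 * m * n" "b + n + n \<le> 3 * m * n" using assms by linarith+
qed

theorem theorem12:
  shows "\<exists>C::nat. \<forall>(n::nat) (m::nat) (A::(nat, nat) nfa) (B::(nat, nat) nfa).
    n \<ge> 1 \<and> m \<ge> 1 \<and> wf_nfa A \<and> wf_nfa B \<and>
    alphabet A = alphabet B \<and> card (alphabet A) = m \<and>
    card (states A) \<le> n \<and> card (states B) \<le> n \<longrightarrow>
    (\<exists>(A'::(nat, nat) nfa) (B'::(nat, nat) nfa).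
       is_dfa A' \<and> is_dfa B' \<and>
       card (states A') \<le> C * m * n \<and> card (states B') \<le> C * m * n \<and>
       alphabet A' = alphabet B' \<and> card (alphabet A') \<le> C * m * n \<and>
       (\<forall>r \<ge> 1. (\<exists>ws. is_tower (lang A) (lang B) ws \<and> length ws = r) \<longleftrightarrow>
                 (\<exists>ws. is_tower (lang A') (lang B') ws \<and> length ws = r)) \<and>
       ((\<exists>w. is_infinite_tower (lang A) (lang B) w) \<longleftrightarrow>
        (\<exists>w. is_infinite_tower (lang A') (lang B') w)))"
proof (intro exI[of _ 3] allI impI)
  fix n m :: nat and A B :: "(nat, nat) nfa"
  assume H: "n \<ge> 1 \<and> m \<ge> 1 \<and> wf_nfa A \<and> wf_nfa B \<and>
    alphabet A = alphabet B \<and> card (alphabet A) = m \<and>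
    card (states A) \<le> n \<and> card (states B) \<le> n"
  then have n: "n \<ge> 1" and m: "m \<ge> 1" and wA: "wf_nfa A" and wB: "wf_nfa B"
    and AB: "alphabet A = alphabet B" and cm: "card (alphabet A) = m"
    and cA: "card (states A) \<le> n" and cB: "card (states B) \<le> n" by auto
  have fin: "finite (alphabet A)" "finite (states A)" "finite (states B)"
    using wA wB unfolding wf_nfa_def by auto
  define G where "G = (\<lambda>a. 3 * a) ` alphabet A \<union> (\<lambda>q. 3 * q + 1) ` states A \<union> (\<lambda>q. 3 * q + 2) ` states B"
  have finG: "finite G" using fin unfolding G_def by simp
  have G0: "x div 3 \<in> alphabet A" if "x \<in> G" "x mod 3 = 0" for x
    using that unfolding G_def by (auto; presburger)
  interpret IA: cons A 1 G
    by unfold_locales (use wA finG G0 in \<open>auto simp: G_def\<close>)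
  interpret IB: cons B 2 G
    by unfold_locales (use wB finG G0 AB in \<open>auto simp: G_def\<close>)
  interpret TR: transfer "lang A" "lang B" "lang (dfa0 A 1 G)" "lang (dfa0 B 2 G)" G
    by unfold_locales (use IA.sound IB.sound IA.ext IB.ext IA.lang_G IB.lang_G in blast)+
  define A' where "A' = mapn (to_nat :: st \<Rightarrow> nat) (dfa0 A 1 G)"
  define B' where "B' = mapn (to_nat :: st \<Rightarrow> nat) (dfa0 B 2 G)"
  have dA: "is_dfa A'" unfolding A'_def
    by (rule is_dfa_map[OF inj_to_nat IA.wf0, of Start]) (auto simp: dfa0_def intro: IA.det0)
  have dB: "is_dfa B'" unfolding B'_def
    by (rule is_dfa_map[OF inj_to_nat IB.wf0, of Start]) (auto simp: dfa0_def intro: IB.det0)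
  have lA: "lang A' = lang (dfa0 A 1 G)" unfolding A'_def by (rule lang_map[OF inj_to_nat])
  have lB: "lang B' = lang (dfa0 B 2 G)" unfolding B'_def by (rule lang_map[OF inj_to_nat])
  have sA: "card (states A') \<le> 3 * m * n"
  proof -
    have "card (states A') \<le> card (dstates A)"
      unfolding A'_def mapn_def dfa0_def using IA.wf0 unfolding wf_nfa_def dfa0_def
      by (auto intro: card_image_le)
    also have "\<dots> \<le> 1 + card (states A) + card (states A) * card (alphabet A)"
      by (rule card_dstates[OF wA])
    also have "\<dots> \<le> 3 * m * n" by (rule arith_bound(1)[OF n m cA cm])
    finally show ?thesis .
  qed
  have sB: "card (states B') \<le> 3 * m * n"
  proof -
    have "card (states B') \<le> card (dstates B)"
      unfolding B'_def mapn_def dfa0_def using IB.wf0 unfolding wf_nfa_def dfa0_def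
      by (auto intro: card_image_le)
    also have "\<dots> \<le> 1 + card (states B) + card (states B) * card (alphabet B)"
      by (rule card_dstates[OF wB])
    also have "\<dots> \<le> 3 * m * n" by (rule arith_bound(1)[OF n m cB]) (use cm AB in simp)
    finally show ?thesis .
  qed
  have alph: "alphabet A' = G" "alphabet B' = G"
    unfolding A'_def B'_def mapn_def dfa0_def by simp_all
  have cG: "card G \<le> 3 * m * n"
  proof -
    have "card G \<le> card ((\<lambda>a. 3 * a) ` alphabet A) + card ((\<lambda>q. 3 * q + 1) ` states A) + card ((\<lambda>q. 3 * q + 2) ` states B)"
      unfolding G_def by (meson card_Un_le le_trans add_le_mono1)
    also have "\<dots> \<le> card (alphabet A) + card (states A) + card (states B)"
      using fin by (intro add_mono card_image_le) auto
    also have "\<dots> \<le> m + n + n" using cA cB cm by simp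
    also have "\<dots> \<le> 3 * m * n" by (rule arith_bound(2)[OF n m cA refl])
    finally show ?thesis .
  qed
  have T: "(\<exists>ws. is_tower (lang A) (lang B) ws \<and> length ws = r) \<longleftrightarrow>
           (\<exists>ws. is_tower (lang A') (lang B') ws \<and> length ws = r)" for r
    unfolding tower_iff_alt lA lB using TR.alt_iff .
  have I: "(\<exists>w. is_infinite_tower (lang A) (lang B) w) \<longleftrightarrow>
           (\<exists>w. is_infinite_tower (lang A') (lang B') w)"
    unfolding itower_iff_ialt lA lB using TR.ialt_iff .
  have fin: "is_dfa A' \<and> is_dfa B' \<and>
       card (states A') \<le> 3 * m * n \<and> card (states B') \<le> 3 * m * n \<and>
       alphabet A' = alphabet B' \<and> card (alphabet A') \<le> 3 * m * n \<and>
       (\<forall>r \<ge> 1. (\<exists>ws. is_tower (lang A) (lang B) ws \<and> length ws = r) \<longleftrightarrow>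
                 (\<exists>ws. is_tower (lang A') (lang B') ws \<and> length ws = r)) \<and>
       ((\<exists>w. is_infinite_tower (lang A) (lang B) w) \<longleftrightarrow>
        (\<exists>w. is_infinite_tower (lang A') (lang B') w))"
    using dA dB sA sB alph cG T I by simp
  then show "\<exists>(A''::(nat, nat) nfa) (B''::(nat, nat) nfa). is_dfa A'' \<and> is_dfa B'' \<and>
       card (states A'') \<le> 3 * m * n \<and> card (states B'') \<le> 3 * m * n \<and>
       alphabet A'' = alphabet B'' \<and> card (alphabet A'') \<le> 3 * m * n \<and>
       (\<forall>r \<ge> 1. (\<exists>ws. is_tower (lang A) (lang B) ws \<and> length ws = r) \<longleftrightarrow>
                 (\<exists>ws. is_tower (lang A'') (lang B'') ws \<and> length ws = r)) \<and>
       ((\<exists>w. is_infinite_tower (lang A) (lang B) w) \<longleftrightarrow>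
        (\<exists>w. is_infinite_tower (lang A'') (lang B'') w))" by blast
qed

end
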